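(* Let $\mathcal{X}=\{1,\ldots,d\}$ and let $\mathcal{S}$ be the probability simplex in $\mathbb{R}^d$. Let $\{\Gamma(r)\}_{r\in\mathcal{S}}$ be a family of rate matrices on $\mathcal{X}$ such that: (a) for each $r\in\mathcal{S}$, $\Gamma(r)$ is the rate matrix of an ergodic Markov chain on $\mathcal{X}$ with stationary distribution $\pi(r)$; (b) there exist $R:\mathcal{X}\times[0,1]\to\mathbb{R}$ and $K:\mathcal{X}\times\mathbb{R}^d\to\mathbb{R}$ such that for each $x\in\mathcal{X}$, $R(x,\cdot)$ is continuous and $K(x,\cdot)$ is a $\mathcal{C}^1$ function on $\mathcal{S}$, and for each $r\in\mathcal{S}$, $$\pi(r)_x=\frac{\exp[-H(x,r)-R(x,r_x)]}{Z(r)},\quad x\in\mathcal{X},$$ where $H(x,r)=K(x,r)+\sum_{z\in\mathcal{X}}\big(\frac{\partial}{\partial r_x}K(z,r)\big)r_z$ and $Z(r)=\sum_{x\in\mathcal{X}}\exp[-H(x,r)-R(x,r_x)]$. Then $\{\Gamma(r)\}_{r\in\mathcal{S}}$ is locally Gibbs with potential $$U(r)=\sum_{z\in\mathcal{X}}\Big[\int_0^{r_z}R(z,w)\,dw+K(z,r)r_z\Big].$$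
   Context: A rate matrix on $\mathcal{X}$ is a $d\times d$ real matrix with nonnegative off-diagonal entries and zero row sums. Let $\mathcal{H}_1=\{v:\sum_iv_i=1\}$, $\mathcal{H}_0=\{v:\sum_iv_i=0\}$; a function is $\mathcal{C}^1$ on $\mathcal{S}$ if it is continuously differentiable on a relatively open subset of $\mathcal{H}_1$ containing $\mathcal{S}$, with gradient $DU(r)\in\mathcal{H}_0$, and $D_vU=\langle DU,v\rangle$. A family $\{\Gamma(r)\}$ is locally Gibbs with potential $U$ if (a) each $\Gamma(r)$ is the rate matrix of an ergodic Markov chain with stationary distribution $\pi(r)$, and (b) $U$ is $\mathcal{C}^1$ on $\mathcal{S}$ and $\frac{\pi(r)_y}{\pi(r)_x}=\exp(-D_{e_y-e_x}U(r))$ for all $x\ne y$ in $\mathcal{X}$ and $r\in\mathcal{S}$ ($e_x$ the unit vectors). *)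

theory Defs
  imports "HOL-Analysis.Analysis"
begin

text \<open>State space X = the finite type 'd; vectors in R^d are real^'d.\<close>

definition H1 :: "(real^'d) set" where
  "H1 = {v. (\<Sum>i\<in>UNIV. v$i) = 1}"

definition H0 :: "(real^'d) set" where
  "H0 = {v. (\<Sum>i\<in>UNIV. v$i) = 0}"

definition prob_simplex :: "(real^'d) set" where
  "prob_simplex = {v. (\<forall>i. 0 \<le> v$i) \<and> (\<Sum>i\<in>UNIV. v$i) = 1}"

definition C1_on :: "(real^'d) set \<Rightarrow> (real^'d \<Rightarrow> real) \<Rightarrow> bool" where
  "C1_on S U \<longleftrightarrow> (\<exists>A DU. openin (top_of_set H1) A \<and> S \<subseteq> A \<and>
      (\<forall>r\<in>A. DU r \<in> H0 \<and> (U has_derivative (\<lambda>v. DU r \<bullet> v)) (at r within A)) \<and>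
      continuous_on A DU)"

definition grad :: "(real^'d \<Rightarrow> real) \<Rightarrow> real^'d \<Rightarrow> real^'d" where
  "grad U r = (THE g. g \<in> H0 \<and> (U has_derivative (\<lambda>v. g \<bullet> v)) (at r within H1))"

definition dir_deriv :: "(real^'d \<Rightarrow> real) \<Rightarrow> real^'d \<Rightarrow> real^'d \<Rightarrow> real" where
  "dir_deriv U v r = grad U r \<bullet> v"

definition rate_matrix :: "real^'d^'d \<Rightarrow> bool" where
  "rate_matrix G \<longleftrightarrow> (\<forall>x y. x \<noteq> y \<longrightarrow> 0 \<le> G$x$y) \<and> (\<forall>x. (\<Sum>y\<in>UNIV. G$x$y) = 0)"

text \<open>Ergodic (irreducible) finite-state continuous-time chain.\<close>
definition ergodic_rate_matrix :: "real^'d^'d \<Rightarrow> bool" where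
  "ergodic_rate_matrix G \<longleftrightarrow> rate_matrix G \<and>
     (\<forall>x y. (x, y) \<in> {(a, b). a \<noteq> b \<and> 0 < G$a$b}\<^sup>*)"

definition stationary_dist :: "real^'d^'d \<Rightarrow> real^'d \<Rightarrow> bool" where
  "stationary_dist G p \<longleftrightarrow> p \<in> prob_simplex \<and> (\<forall>y. (\<Sum>x\<in>UNIV. p$x * G$x$y) = 0)"

definition unit_vec :: "'d \<Rightarrow> real^'d" where
  "unit_vec x = axis x 1"

definition locally_Gibbs :: "(real^'d \<Rightarrow> real^'d^'d) \<Rightarrow> (real^'d \<Rightarrow> real) \<Rightarrow> bool" where
  "locally_Gibbs \<Gamma> U \<longleftrightarrow>
     (\<forall>r\<in>prob_simplex. ergodic_rate_matrix (\<Gamma> r)) \<and>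
     C1_on prob_simplex U \<and>
     (\<forall>r\<in>prob_simplex. \<forall>p. stationary_dist (\<Gamma> r) p \<longrightarrow>
        (\<forall>x y. x \<noteq> y \<longrightarrow>
           p$y / p$x = exp (- dir_deriv U (unit_vec y - unit_vec x) r)))"

text \<open>R(x,.) is only given on [0,1]; we extend it constantly outside.\<close>
definition clamp01 :: "real \<Rightarrow> real" where
  "clamp01 w = max 0 (min 1 w)"

definition oriented_integral :: "real \<Rightarrow> real \<Rightarrow> (real \<Rightarrow> real) \<Rightarrow> real" where
  "oriented_integral a b f = (if a \<le> b then integral {a..b} f else - integral {b..a} f)"

end

theory Submission
  imports Defs
begin

lemma oint_deriv:
  fixes f :: "real \<Rightarrow> real"
  assumes cf: "continuous_on UNIV f"
  shows "((\<lambda>t. oriented_integral 0 t f) has_real_derivative f t) (at t)"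
proof -
  define a where "a = -(\<bar>t\<bar>+1)"
  define b where "b = \<bar>t\<bar>+1"
  have ab: "a < 0" "0 < b" "a < t" "t < b" unfolding a_def b_def by auto
  have cab: "continuous_on {a..b} f" using cf continuous_on_subset by blast
  have int: "f integrable_on {a..b}" using cab integrable_continuous_real by blast
  have "((\<lambda>u. integral {a..u} f) has_vector_derivative f t) (at t within {a..b})"
    by (rule integral_has_vector_derivative[OF cab]) (use ab in auto)
  moreover have "at t within {a..b} = at t"
    by (rule at_within_interior) (use ab in auto)
  ultimately have d: "((\<lambda>u. integral {a..u} f - integral {a..0} f) has_real_derivative f t) (at t)"
    by (auto simp: has_real_derivative_iff_has_vector_derivative intro!: derivative_eq_intros)
  show ?thesis
  proof (rule has_field_derivative_transform_within_open[OF d, of "{a<..<b}"])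
    fix u assume u: "u \<in> {a<..<b}"
    show "integral {a..u} f - integral {a..0} f = oriented_integral 0 u f"
    proof (cases "0 \<le> u")
      case True
      have "f integrable_on {a..u}" by (rule integrable_subinterval_real[OF int]) (use u in auto)
      then have "integral {a..0} f + integral {0..u} f = integral {a..u} f"
        using Henstock_Kurzweil_Integration.integral_combine[where a=a and c=0 and b=u and f=f] True ab by simp
      then show ?thesis using True by (simp add: oriented_integral_def)
    next
      case False
      have "f integrable_on {a..0}" by (rule integrable_subinterval_real[OF int]) (use ab in auto)
      then have "integral {a..u} f + integral {u..0} f = integral {a..0} f"
        using Henstock_Kurzweil_Integration.integral_combine[where a=a and c=u and b=0 and f=f] False u by simp
      then show ?thesis using False by (simp add: oriented_integral_def)
    qed
  qed (use ab in auto)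
qed

lemma sum_H1: "r \<in> H1 \<Longrightarrow> (\<Sum>i\<in>UNIV. r$i) = 1" by (simp add: H1_def)

lemma grad_unique_H1:
  fixes U :: "real^'d \<Rightarrow> real"
  assumes r: "r \<in> H1" and g: "g1 \<in> H0" "g2 \<in> H0"
    and d1: "(U has_derivative (\<lambda>v. g1 \<bullet> v)) (at r within H1)"
    and d2: "(U has_derivative (\<lambda>v. g2 \<bullet> v)) (at r within H1)"
  shows "g1 = g2"
proof -
  define v where "v = g1 - g2"
  have vH0: "(\<Sum>i\<in>UNIV. v$i) = 0" using g unfolding v_def H0_def by (simp add: sum_subtractf)
  define p where "p = (\<lambda>t::real. r + t *\<^sub>R v)"
  have pd: "(p has_derivative (\<lambda>t. t *\<^sub>R v)) (at 0)"
    unfolding p_def by (auto intro!: derivative_eq_intros)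
  have sub: "p ` UNIV \<subseteq> H1"
    using r vH0 by (auto simp: p_def H1_def sum.distrib sum_distrib_left[symmetric])
  have p0: "p 0 = r" by (simp add: p_def)
  have "(U has_derivative (\<lambda>v. g1 \<bullet> v)) (at (p 0) within range p)"
    using has_derivative_subset[OF d1 sub] p0 by simp
  note c1 = has_derivative_in_compose[OF pd this]
  have "(U has_derivative (\<lambda>v. g2 \<bullet> v)) (at (p 0) within range p)"
    using has_derivative_subset[OF d2 sub] p0 by simp
  note c2 = has_derivative_in_compose[OF pd this]
  have "(\<lambda>t. g1 \<bullet> (t *\<^sub>R v)) = (\<lambda>t. g2 \<bullet> (t *\<^sub>R v))"
    by (rule has_derivative_unique[OF c1 c2])
  then have "g1 \<bullet> v = g2 \<bullet> v" by (metis scaleR_one)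
  then have "v \<bullet> v = 0" unfolding v_def by (simp add: inner_diff_left)
  then show ?thesis unfolding v_def by simp
qed

lemma deriv_openin_H1:
  assumes "openin (top_of_set H1) A" "r \<in> A" "(f has_derivative f') (at r within A)"
  shows "(f has_derivative f') (at r within H1)"
proof -
  obtain T where T: "open T" "A = H1 \<inter> T" using assms(1) openin_open by blast
  have "at r within A = at r within H1"
    by (rule at_within_nhd[where S=T]) (use T assms(2) in auto)
  then show ?thesis using assms(3) by simp
qed

lemma grad_eq:
  assumes "openin (top_of_set H1) A" "r \<in> A" "g \<in> H0"
    "(f has_derivative (\<lambda>v. g \<bullet> v)) (at r within A)"
  shows "grad f r = g"
proof -
  have A: "A \<subseteq> H1" using openin_imp_subset[OF assms(1)] by simp
  have d: "(f has_derivative (\<lambda>v. g \<bullet> v)) (at r within H1)"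
    using deriv_openin_H1 assms by blast
  show ?thesis unfolding grad_def
  proof (rule the_equality)
    show "g \<in> H0 \<and> (f has_derivative (\<bullet>) g) (at r within H1)" using d assms(3) by simp
    fix g' assume "g' \<in> H0 \<and> (f has_derivative (\<bullet>) g') (at r within H1)"
    then show "g' = g" using grad_unique_H1[of r g' g f] d assms(2,3) A by auto
  qed
qed

lemma deriv_transform_H0:
  assumes d: "(f has_derivative (\<lambda>v. g \<bullet> v)) (at r within A)"
    and A: "A \<subseteq> H1" and r: "r \<in> H1"
    and eq: "\<And>v. v \<in> H0 \<Longrightarrow> g \<bullet> v = g' \<bullet> v"
  shows "(f has_derivative (\<lambda>v. g' \<bullet> v)) (at r within A)"
proof -
  have bl: "bounded_linear (\<lambda>v. g' \<bullet> v)" by (rule bounded_linear_inner_right)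
  have lim: "((\<lambda>y. (1 / norm(y - r)) *\<^sub>R (f y - (f r + g \<bullet> (y - r)))) \<longlongrightarrow> 0) (at r within A)"
    using d by (simp add: has_derivative_within)
  have ev: "\<forall>\<^sub>F y in at r within A. (1 / norm(y - r)) *\<^sub>R (f y - (f r + g \<bullet> (y - r)))
      = (1 / norm(y - r)) *\<^sub>R (f y - (f r + g' \<bullet> (y - r)))"
  proof -
    have "\<forall>y. y \<noteq> r \<longrightarrow> y \<in> A \<longrightarrow> (1 / norm(y - r)) *\<^sub>R (f y - (f r + g \<bullet> (y - r)))
      = (1 / norm(y - r)) *\<^sub>R (f y - (f r + g' \<bullet> (y - r)))"
    proof (intro allI impI)
      fix y assume "y \<in> A"
      then have "y - r \<in> H0" using A r by (auto simp: H0_def H1_def sum_subtractf)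
      then show "(1 / norm(y - r)) *\<^sub>R (f y - (f r + g \<bullet> (y - r)))
        = (1 / norm(y - r)) *\<^sub>R (f y - (f r + g' \<bullet> (y - r)))" using eq by simp
    qed
    then show ?thesis unfolding eventually_at_filter by (simp add: always_eventually)
  qed
  show ?thesis unfolding has_derivative_within
    using bl tendsto_cong[OF ev] lim by simp
qed

lemma zero_propagate:
  fixes G :: "real^'d^'d" and w :: "real^'d"
  assumes rm: "rate_matrix G" and wn: "\<forall>x. 0 \<le> w$x"
    and st: "\<forall>y. (\<Sum>x\<in>UNIV. w$x * G$x$y) = 0"
    and path: "(x, y) \<in> {(a, b). a \<noteq> b \<and> 0 < G$a$b}\<^sup>*" and wy: "w$y = 0"
  shows "w$x = 0"
  using path
proof (induction rule: converse_rtrancl_induct)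
  case base
  then show ?case using wy .
next
  case (step a b)
  then have ab: "a \<noteq> b" "0 < G$a$b" and wb: "w$b = 0" by auto
  have "(\<Sum>x\<in>UNIV. w$x * G$x$b) = w$b * G$b$b + (\<Sum>x\<in>UNIV - {b}. w$x * G$x$b)"
    by (simp add: sum.remove[of UNIV b])
  then have s0: "(\<Sum>x\<in>UNIV - {b}. w$x * G$x$b) = 0" using st wb by simp
  have nn: "\<forall>x\<in>UNIV - {b}. 0 \<le> w$x * G$x$b"
    using rm wn unfolding rate_matrix_def by auto
  have "w$a * G$a$b = 0"
    using sum_nonneg_eq_0_iff[of "UNIV - {b}" "\<lambda>x. w$x * G$x$b"] s0 nn ab by auto
  then show ?case using ab by simp
qed

lemma stationary_pos:
  assumes erg: "ergodic_rate_matrix G" and q: "stationary_dist G q"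
  shows "0 < q$x"
proof (rule ccontr)
  assume "\<not> 0 < q$x"
  moreover have "0 \<le> q$x" using q by (simp add: stationary_dist_def prob_simplex_def)
  ultimately have qx: "q$x = 0" by simp
  have "\<forall>z. q$z = 0"
  proof
    fix z
    show "q$z = 0"
      by (rule zero_propagate[where G=G and y=x])
        (use erg q qx in \<open>auto simp: ergodic_rate_matrix_def stationary_dist_def prob_simplex_def\<close>)
  qed
  then have "(\<Sum>i\<in>UNIV. q$i) = 0" by simp
  moreover have "(\<Sum>i\<in>UNIV. q$i) = 1" using q by (simp add: stationary_dist_def prob_simplex_def)
  ultimately show False by simp
qed

lemma stationary_unique:
  fixes G :: "real^'d^'d"
  assumes erg: "ergodic_rate_matrix G" and p: "stationary_dist G p" and q: "stationary_dist G q"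
  shows "p = q"
proof -
  have qpos: "\<And>x. 0 < q$x" using stationary_pos[OF erg q] .
  define c where "c = Min ((\<lambda>x. p$x / q$x) ` UNIV)"
  obtain y where y: "c = p$y / q$y"
  proof -
    have "c \<in> (\<lambda>x. p$x / q$x) ` UNIV" unfolding c_def by (rule Min_in) auto
    then show ?thesis using that by blast
  qed
  have cle: "\<And>x. c \<le> p$x / q$x" unfolding c_def by simp
  define w where "w = p - c *\<^sub>R q"
  have wn: "\<forall>x. 0 \<le> w$x"
  proof
    fix x
    have "c * q$x \<le> p$x" using cle[of x] qpos[of x] by (simp add: pos_le_divide_eq)
    then show "0 \<le> w$x" by (simp add: w_def)
  qed
  have st: "\<forall>z. (\<Sum>x\<in>UNIV. w$x * G$x$z) = 0"
  proof
    fix z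
    have "(\<Sum>x\<in>UNIV. w$x * G$x$z) = (\<Sum>x\<in>UNIV. p$x * G$x$z) - c * (\<Sum>x\<in>UNIV. q$x * G$x$z)"
      by (simp add: w_def algebra_simps sum_subtractf sum_distrib_left)
    then show "(\<Sum>x\<in>UNIV. w$x * G$x$z) = 0"
      using p q by (simp add: stationary_dist_def)
  qed
  have wy: "w$y = 0" using y qpos[of y] by (simp add: w_def)
  have w0: "\<forall>x. w$x = 0"
  proof
    fix x
    show "w$x = 0"
      by (rule zero_propagate[where G=G and y=y]) (use erg wn st wy in \<open>auto simp: ergodic_rate_matrix_def\<close>)
  qed
  then have pc: "\<And>x. p$x = c * q$x" by (simp add: w_def)
  have "(\<Sum>i\<in>UNIV. p$i) = c * (\<Sum>i\<in>UNIV. q$i)" by (simp add: pc sum_distrib_left)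
  then have "c = 1" using p q by (simp add: stationary_dist_def prob_simplex_def)
  then show ?thesis using pc by (simp add: vec_eq_iff)
qed

lemma clamp01_cont: "continuous_on UNIV clamp01"
  unfolding clamp01_def by (intro continuous_intros)

lemma clamp01_range: "clamp01 w \<in> {0..1}"
  unfolding clamp01_def by auto

lemma Rc_cont:
  assumes "continuous_on {0..1} (R :: real \<Rightarrow> real)"
  shows "continuous_on UNIV (\<lambda>w. R (clamp01 w))"
  by (rule continuous_on_compose2[OF assms clamp01_cont]) (use clamp01_range in auto)

theorem lemma6p7:
  fixes \<Gamma> :: "real^'d \<Rightarrow> real^'d^'d"
    and \<pi> :: "real^'d \<Rightarrow> real^'d"
    and R :: "'d \<Rightarrow> real \<Rightarrow> real"
    and K :: "'d \<Rightarrow> real^'d \<Rightarrow> real"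
  assumes erg: "\<forall>r\<in>prob_simplex. ergodic_rate_matrix (\<Gamma> r) \<and> stationary_dist (\<Gamma> r) (\<pi> r)"
    and R_cont: "\<forall>x. continuous_on {0..1} (R x)"
    and K_C1: "\<forall>x. C1_on prob_simplex (K x)"
    and gibbs: "\<forall>r\<in>prob_simplex. \<forall>x.
       \<pi> r $ x =
         exp (- (K x r + (\<Sum>z\<in>UNIV. (grad (K z) r $ x) * r$z)) - R x (r$x)) /
         (\<Sum>x'\<in>UNIV. exp (- (K x' r + (\<Sum>z\<in>UNIV. (grad (K z) r $ x') * r$z)) - R x' (r$x')))"
  shows "locally_Gibbs \<Gamma>
           (\<lambda>r. \<Sum>z\<in>UNIV. oriented_integral 0 (r$z) (\<lambda>w. R z (clamp01 w)) + K z r * r$z)"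
proof -
  define U where "U = (\<lambda>r::real^'d. \<Sum>z\<in>UNIV. oriented_integral 0 (r$z) (\<lambda>w. R z (clamp01 w)) + K z r * r$z)"
  obtain AK DK where AK: "\<And>x. openin (top_of_set H1) (AK x)" "\<And>x. prob_simplex \<subseteq> AK x"
      "\<And>x r. r \<in> AK x \<Longrightarrow> DK x r \<in> H0 \<and> (K x has_derivative (\<lambda>v. DK x r \<bullet> v)) (at r within AK x)"
      "\<And>x. continuous_on (AK x) (DK x)"
    using K_C1 unfolding C1_on_def by metis
  define A where "A = (\<Inter>x. AK x)"
  have Aopen: "openin (top_of_set H1) A" unfolding A_def by (rule openin_INT2) (use AK in auto)
  have AH1: "A \<subseteq> H1" using openin_imp_subset[OF Aopen] by simp
  have SA: "prob_simplex \<subseteq> A" unfolding A_def using AK(2) by auto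
  have AAK: "\<And>x. A \<subseteq> AK x" unfolding A_def by auto
  define g where "g = (\<lambda>r::real^'d. \<chi> i. R i (clamp01 (r$i)) + K i r + (\<Sum>z\<in>UNIV. r$z * (DK z r $ i)))"
  define one where "one = ((\<chi> i. 1) :: real^'d)"
  define DU where "DU = (\<lambda>r. g r - ((\<Sum>i\<in>UNIV. g r $ i) / real CARD('d)) *\<^sub>R one)"
  have cardpos: "real CARD('d) > 0" by simp
  have DUH0: "\<And>r. DU r \<in> H0"
    using cardpos by (simp add: DU_def H0_def one_def sum_subtractf)
  have DUeq: "\<And>r v. v \<in> H0 \<Longrightarrow> DU r \<bullet> v = g r \<bullet> v"
  proof -
    fix r and v :: "real^'d" assume "v \<in> H0"
    then have v0: "(\<Sum>i\<in>UNIV. v$i) = 0" by (simp add: H0_def)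
    have "(\<Sum>i\<in>UNIV. ((\<Sum>i\<in>UNIV. g r $ i) / real CARD('d)) * v$i) = 0"
      by (subst sum_distrib_left[symmetric]) (simp add: v0)
    then show "DU r \<bullet> v = g r \<bullet> v"
      by (simp add: DU_def one_def inner_vec_def left_diff_distrib sum_subtractf)
  qed
  have Kcont: "\<And>x. continuous_on A (K x)"
  proof -
    fix x
    have "continuous_on (AK x) (K x)"
      unfolding continuous_on_eq_continuous_within
      using AK(3) has_derivative_continuous by blast
    then show "continuous_on A (K x)" using continuous_on_subset AAK by blast
  qed
  have c1: "continuous_on A (\<lambda>x. R i (clamp01 (x $ i)))" for i
    using continuous_on_compose2[OF Rc_cont[OF R_cont[rule_format, of i]] continuous_on_component[OF continuous_on_id, of _ i]]
    by auto
  have c2: "continuous_on A (\<lambda>x. DK z x $ i)" for z i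
    using continuous_on_component[OF continuous_on_subset[OF AK(4) AAK]] .
  have gcont: "continuous_on A g"
    unfolding g_def by (intro continuous_on_vec_lambda continuous_intros c1 c2 Kcont)
  have DUcont: "continuous_on A DU"
    unfolding DU_def using cardpos by (intro continuous_intros gcont) auto
  have Fd: "\<And>z t. ((\<lambda>t. oriented_integral 0 t (\<lambda>w. R z (clamp01 w))) has_real_derivative R z (clamp01 t)) (at t)"
    using oint_deriv Rc_cont R_cont by blast
  have Ug: "\<And>r. r \<in> A \<Longrightarrow> (U has_derivative (\<lambda>v. g r \<bullet> v)) (at r within A)"
  proof -
    fix r assume rA: "r \<in> A"
    have t1: "((\<lambda>r. oriented_integral 0 (r$z) (\<lambda>w. R z (clamp01 w))) has_derivative
        (\<lambda>v. R z (clamp01 (r$z)) * v$z)) (at r within A)" for z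
      using has_derivative_compose[OF bounded_linear_imp_has_derivative[OF bounded_linear_vec_nth[of z]]
          has_field_derivative_imp_has_derivative[OF Fd[of z "r$z"]]] .
    have t2: "((\<lambda>r. K z r * r$z) has_derivative
        (\<lambda>v. K z r * v$z + (DK z r \<bullet> v) * r$z)) (at r within A)" for z
      using has_derivative_mult[OF has_derivative_subset[OF AK(3)[of r z, THEN conjunct2] AAK]
          bounded_linear_imp_has_derivative[OF bounded_linear_vec_nth[of z]]]
        rA AAK by auto
    have "(U has_derivative (\<lambda>v. \<Sum>z\<in>UNIV. R z (clamp01 (r$z)) * v$z + (K z r * v$z + (DK z r \<bullet> v) * r$z))) (at r within A)"
      unfolding U_def by (intro has_derivative_sum has_derivative_add t1 t2)
    then show "(U has_derivative (\<lambda>v. g r \<bullet> v)) (at r within A)"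
    proof (rule has_derivative_eq_rhs)
      show "(\<lambda>v. \<Sum>z\<in>UNIV. R z (clamp01 (r$z)) * v$z + (K z r * v$z + (DK z r \<bullet> v) * r$z)) = (\<lambda>v. g r \<bullet> v)"
      proof
        fix v
        have "(\<Sum>z\<in>UNIV. (DK z r \<bullet> v) * r$z) = (\<Sum>i\<in>UNIV. (\<Sum>z\<in>UNIV. r$z * (DK z r $ i)) * v$i)"
        proof -
          have "(\<Sum>z\<in>UNIV. (DK z r \<bullet> v) * r$z) = (\<Sum>z\<in>UNIV. \<Sum>i\<in>UNIV. r$z * (DK z r $ i) * v$i)"
            by (simp add: inner_vec_def sum_distrib_right sum_distrib_left mult.commute mult.left_commute)
          also have "\<dots> = (\<Sum>i\<in>UNIV. \<Sum>z\<in>UNIV. r$z * (DK z r $ i) * v$i)"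
            by (rule sum.swap)
          also have "\<dots> = (\<Sum>i\<in>UNIV. (\<Sum>z\<in>UNIV. r$z * (DK z r $ i)) * v$i)"
            by (simp add: sum_distrib_right)
          finally show ?thesis .
        qed
        then show "(\<Sum>z\<in>UNIV. R z (clamp01 (r$z)) * v$z + (K z r * v$z + (DK z r \<bullet> v) * r$z)) = g r \<bullet> v"
          by (simp add: g_def inner_vec_def sum.distrib algebra_simps)
      qed
    qed
  qed
  have UDU: "\<And>r. r \<in> A \<Longrightarrow> (U has_derivative (\<lambda>v. DU r \<bullet> v)) (at r within A)"
    by (rule deriv_transform_H0[OF Ug]) (use AH1 DUeq in auto)
  have C1U: "C1_on prob_simplex U"
    unfolding C1_on_def using Aopen SA DUH0 UDU DUcont by blast
  have gradU: "\<And>r. r \<in> A \<Longrightarrow> grad U r = DU r"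
    using grad_eq[OF Aopen _ DUH0 UDU] by blast
  have gradK: "\<And>z r. r \<in> prob_simplex \<Longrightarrow> grad (K z) r = DK z r"
    using grad_eq[OF AK(1)] AK(2,3) by blast
  have "locally_Gibbs \<Gamma> U"
    unfolding locally_Gibbs_def
  proof (intro conjI ballI allI impI)
    show "\<And>r. r \<in> prob_simplex \<Longrightarrow> ergodic_rate_matrix (\<Gamma> r)" using erg by blast
    show "C1_on prob_simplex U" by (rule C1U)
    fix r p and x y :: 'd
    assume rS: "r \<in> prob_simplex" and pst: "stationary_dist (\<Gamma> r) p" and xy: "x \<noteq> y"
    have pp: "p = \<pi> r" using stationary_unique[of "\<Gamma> r" p "\<pi> r"] erg rS pst by blast
    have rA: "r \<in> A" using rS SA by blast
    have clamp: "\<And>i. clamp01 (r$i) = r$i"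
    proof -
      fix i
      have "0 \<le> r$i" using rS by (simp add: prob_simplex_def)
      moreover have "r$i \<le> (\<Sum>j\<in>UNIV. r$j)"
        by (rule member_le_sum) (use rS in \<open>auto simp: prob_simplex_def\<close>)
      ultimately show "clamp01 (r$i) = r$i" using rS by (simp add: prob_simplex_def clamp01_def)
    qed
    define a where "a = (\<lambda>i. K i r + (\<Sum>z\<in>UNIV. (grad (K z) r $ i) * r$z) + R i (r$i))"
    have ga: "\<And>i. g r $ i = a i"
      by (simp add: g_def a_def clamp gradK[OF rS] mult.commute)
    define Z where "Z = (\<Sum>x'\<in>UNIV. exp (- (K x' r + (\<Sum>z\<in>UNIV. (grad (K z) r $ x') * r$z)) - R x' (r$x')))"
    have Zpos: "Z > 0" unfolding Z_def by (rule sum_pos) auto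
    have pi: "\<And>i. \<pi> r $ i = exp (- a i) / Z"
      using gibbs rS by (simp add: a_def Z_def algebra_simps)
    have H0e: "unit_vec y - unit_vec x \<in> H0"
      by (simp add: H0_def unit_vec_def sum_subtractf axis_def)
    have "dir_deriv U (unit_vec y - unit_vec x) r = g r \<bullet> (unit_vec y - unit_vec x)"
      unfolding dir_deriv_def gradU[OF rA] using DUeq[OF H0e] .
    also have "\<dots> = a y - a x"
      by (simp add: unit_vec_def inner_diff_right inner_axis ga)
    finally have dd: "dir_deriv U (unit_vec y - unit_vec x) r = a y - a x" .
    show "p $ y / p $ x = exp (- dir_deriv U (unit_vec y - unit_vec x) r)"
      unfolding pp pi dd using Zpos by (simp add: exp_diff[symmetric] exp_minus field_simps)
  qed
  then show ?thesis by (simp add: U_def)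
qed

end
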